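(* Let $H=(v_1,\dots,v_6)$ be an embedded equilateral hexagon in standard position whose action-angle coordinates $(d_1,d_2,d_3,\theta_1,\theta_2,\theta_3)$ for the $T_{135}$ triangulation are defined, and let $d=\sqrt{2d_1^2d_2^2+2d_1^2d_3^2+2d_2^2d_3^2-d_1^4-d_2^4-d_3^4}$. If $J(H)=(-1,1)$, then $f_i<0$, $g_i>0$ and $h_i>0$ for all $i\in\{1,2,3\}$, where \begin{align*} f_1= & d_2\sqrt{4-d_2^2}\sin\theta_2\big(d_3d-(d_1^2-d_2^2+d_3^2)\sqrt{4-d_3^2}\cos\theta_3\big)- d_3\sqrt{4-d_3^2}\sin\theta_3\big(d_2d-(d_1^2+d_2^2-d_3^2)\sqrt{4-d_2^2}\cos\theta_2\big),\\ g_1= & \sqrt{4-d_2^2}\Big(\tfrac{-d_1^2+d_2^2+d_3^2}{2d_2 d_3}\cos\theta_2\sin\theta_3+\sin\theta_2\cos\theta_3\Big)-\tfrac{d\sin\theta_3}{2d_3},\\ h_1= & \sqrt{4-d_3^2}\Big(\tfrac{-d_1^2+d_2^2+d_3^2}{2d_2 d_3}\cos\theta_3\sin\theta_2+\sin\theta_3\cos\theta_2\Big)-\tfrac{d\sin\theta_2}{2d_2},\\ f_2 = & d_3\sqrt{4-d_3^2}\sin\theta_3\big(d_1d-(d_1^2+d_2^2-d_3^2)\sqrt{4-d_1^2}\cos\theta_1\big)- d_1\sqrt{4-d_1^2}\sin\theta_1\big(d_3d-(-d_1^2+d_2^2+d_3^2)\sqrt{4-d_3^2}\cos\theta_3\big),\\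 g_2 = &\sqrt{4-d_3^2}\Big(\tfrac{d_1^2-d_2^2+d_3^2}{2d_1 d_3}\cos\theta_3\sin\theta_1+\sin\theta_3\cos\theta_1\Big)-\tfrac{d\sin\theta_1}{2d_1},\\ h_2 = &\sqrt{4-d_1^2}\Big(\tfrac{d_1^2-d_2^2+d_3^2}{2d_1 d_3}\cos\theta_1\sin\theta_3+\sin\theta_1\cos\theta_3\Big)-\tfrac{d\sin\theta_3}{2d_3},\\ f_3 = & d_1\sqrt{4-d_1^2}\sin\theta_1\big(d_2d-(-d_1^2+d_2^2+d_3^2)\sqrt{4-d_2^2}\cos\theta_2\big)-d_2\sqrt{4-d_2^2}\sin\theta_2\big(d_1d-(d_1^2-d_2^2+d_3^2)\sqrt{4-d_1^2}\cos\theta_1\big),\\ g_3 = &\sqrt{4-d_1^2}\Big(\tfrac{d_1^2+d_2^2-d_3^2}{2d_1 d_2}\cos\theta_1\sin\theta_2+\sin\theta_1\cos\theta_2\Big)-\tfrac{d\sin\theta_2}{2d_2},\\ h_3 = &\sqrt{4-d_2^2}\Big( \tfrac{d_1^2+d_2^2-d_3^2}{2d_1 d_2}\cos\theta_2\sin\theta_1+\sin\theta_2\cos\theta_1\Big)-\tfrac{d\sin\theta_1}{2d_1}. \end{align*}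
   Context: An equilateral hexagon is an ordered 6-tuple $H=(v_1,\dots,v_6)$ in $\mathbb{R}^3$ with $\|v_i-v_{i+1}\|=1$ (indices mod 6), edges $e_i=[v_i,v_{i+1}]$, oriented $v_1\to v_2\to\cdots\to v_6\to v_1$; embedded means non-adjacent edges are disjoint and adjacent ones meet only at their common endpoint. Standard position: $v_1=0$, $v_3$ on the positive $x$-axis, $v_5$ in the $xy$-plane with positive $y$-coordinate. Action-angle coordinates ($T_{135}$ triangulation), defined when $v_1,v_3,v_5$ are not collinear and $0<d_i<2$: $d_1=\|v_3-v_1\|$, $d_2=\|v_5-v_3\|$, $d_3=\|v_1-v_5\|$; with $m_1,m_2,m_3$ the midpoints of $[v_1,v_3],[v_3,v_5],[v_5,v_1]$, $u_1,u_2,u_3$ the unit vectors in the $xy$-plane perpendicular to these segments pointing toward the opposite vertex of triangle $v_1v_3v_5$ (toward $v_5,v_1,v_3$ respectively), and $e_z=(0,0,1)$, the angles $\theta_i\in[0,2\pi)$ are determined by $v_{2i}=m_i+\tfrac12\sqrt{4-d_i^2}(\cos\theta_i\,u_i+\sin\theta_i\,e_z)$ (regular planar hexagon: all $\theta_i=\pi$). Explicitly $v_3=(d_1,0,0)$, $v_5=\big(\tfrac{d_1^2-d_2^2+d_3^2}{2d_1},\tfrac{d}{2d_1},0\big)$, $v_2=\big(\tfrac{d_1}{2},\tfrac12\sqrt{4-d_1^2}\cos\theta_1,\tfrac12\sqrt{4-d_1^2}\sin\theta_1\big)$. Joint Chirality-Curl: $curl(H)=\operatorname{sign}\big((v_3-v_1)\times(v_5-v_1)\cdot(v_2-v_1)\big)$.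 For $i=2,4,6$, $T_i$ is the open triangular disk with vertices $v_{i-1},v_i,v_{i+1}$, oriented by the right-hand rule (normal $(v_i-v_{i-1})\times(v_{i+1}-v_i)$), and $\Delta_i$ is the algebraic intersection number of $T_i$ with the oriented polygon $H$. Then $J(H)=(\Delta_2\Delta_4\Delta_6,\ \Delta_2^2\Delta_4^2\Delta_6^2\,curl(H))$. *)

theory Defs
  imports "HOL-Analysis.Analysis" "HOL-Analysis.Cross3"
begin

text \<open>A hexagon is given by a function v :: nat => real^3; the vertices are
  v 1, ..., v 6.  Cyclic indexing: vx v i is v_i with indices taken mod 6
  (vx v 0 = v 6, vx v 7 = v 1).\<close>

definition vx :: "(nat \<Rightarrow> real^3) \<Rightarrow> nat \<Rightarrow> real^3" where
  "vx v i = v (((i + 5) mod 6) + 1)"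

definition edge :: "(nat \<Rightarrow> real^3) \<Rightarrow> nat \<Rightarrow> (real^3) set" where
  "edge v i = closed_segment (vx v i) (vx v (i + 1))"

definition equilateral_hex :: "(nat \<Rightarrow> real^3) \<Rightarrow> bool" where
  "equilateral_hex v \<longleftrightarrow> (\<forall>i\<in>{1..6}. dist (vx v i) (vx v (i + 1)) = 1)"

definition embedded_hex :: "(nat \<Rightarrow> real^3) \<Rightarrow> bool" where
  "embedded_hex v \<longleftrightarrow>
     (\<forall>i\<in>{1..6}. \<forall>j\<in>{1..6}. i \<noteq> j \<longrightarrow>
        (if j = i mod 6 + 1 then edge v i \<inter> edge v j = {vx v j}
         else if i = j mod 6 + 1 then edge v i \<inter> edge v j = {vx v i}
         else edge v i \<inter> edge v j = {}))"

definition standard_position :: "(nat \<Rightarrow> real^3) \<Rightarrow> bool" where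
  "standard_position v \<longleftrightarrow>
     v 1 = 0 \<and> (v 3)$1 > 0 \<and> (v 3)$2 = 0 \<and> (v 3)$3 = 0 \<and>
     (v 5)$3 = 0 \<and> (v 5)$2 > 0"

definition perp_toward :: "real^3 \<Rightarrow> real^3 \<Rightarrow> real^3 \<Rightarrow> real^3" where
  "perp_toward a b c =
     (let w = (c - a) - (((c - a) \<bullet> (b - a)) / ((b - a) \<bullet> (b - a))) *\<^sub>R (b - a)
      in (1 / norm w) *\<^sub>R w)"

definition ez :: "real^3" where
  "ez = vector [0, 0, 1]"

definition angle_coord ::
  "real^3 \<Rightarrow> real^3 \<Rightarrow> real^3 \<Rightarrow> real^3 \<Rightarrow> real \<Rightarrow> real \<Rightarrow> bool" where
  "angle_coord a b c w di th \<longleftrightarrow>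
     0 \<le> th \<and> th < 2 * pi \<and>
     w = midpoint a b + (sqrt (4 - di\<^sup>2) / 2) *\<^sub>R
            (cos th *\<^sub>R perp_toward a b c + sin th *\<^sub>R ez)"

definition sgn_int :: "real \<Rightarrow> int" where
  "sgn_int x = (if x > 0 then 1 else if x < 0 then -1 else 0)"

definition curl :: "(nat \<Rightarrow> real^3) \<Rightarrow> int" where
  "curl v = sgn_int (cross3 (v 3 - v 1) (v 5 - v 1) \<bullet> (v 2 - v 1))"

definition open_tri :: "(nat \<Rightarrow> real^3) \<Rightarrow> nat \<Rightarrow> (real^3) set" where
  "open_tri v i = rel_interior (convex hull {vx v (i - 1), vx v i, vx v (i + 1)})"

definition tri_normal :: "(nat \<Rightarrow> real^3) \<Rightarrow> nat \<Rightarrow> real^3" where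
  "tri_normal v i = cross3 (vx v i - vx v (i - 1)) (vx v (i + 1) - vx v i)"

definition height :: "(nat \<Rightarrow> real^3) \<Rightarrow> nat \<Rightarrow> real^3 \<Rightarrow> real" where
  "height v i x = tri_normal v i \<bullet> (x - vx v i)"

definition edge_contrib :: "(nat \<Rightarrow> real^3) \<Rightarrow> nat \<Rightarrow> nat \<Rightarrow> int" where
  "edge_contrib v i j =
     (let p = vx v j; q = vx v (j + 1); sp = height v i p; sq = height v i q;
          x = p + (sp / (sp - sq)) *\<^sub>R (q - p)
      in if sp * sq < 0 \<and> x \<in> open_tri v i
         then sgn_int (tri_normal v i \<bullet> (q - p)) else 0)"

text \<open>The algebraic intersection number is defined when every intersection of
  H with T_i is a transverse crossing of the interior of an edge.\<close>
definition Delta_defined :: "(nat \<Rightarrow> real^3) \<Rightarrow> nat \<Rightarrow> bool" where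
  "Delta_defined v i \<longleftrightarrow>
     (\<forall>j\<in>{1..6}. \<forall>x\<in>edge v j. x \<in> open_tri v i \<longrightarrow>
        height v i (vx v j) * height v i (vx v (j + 1)) < 0)"

definition Delta :: "(nat \<Rightarrow> real^3) \<Rightarrow> nat \<Rightarrow> int option" where
  "Delta v i = (if Delta_defined v i then Some (\<Sum>j\<in>{1..6}. edge_contrib v i j) else None)"

definition JCC :: "(nat \<Rightarrow> real^3) \<Rightarrow> (int \<times> int) option" where
  "JCC v = (case (Delta v 2, Delta v 4, Delta v 6) of
              (Some a, Some b, Some c) \<Rightarrow>
                 Some (a * b * c, a\<^sup>2 * b\<^sup>2 * c\<^sup>2 * curl v)
            | _ \<Rightarrow> None)"

definition dd :: "real \<Rightarrow> real \<Rightarrow> real \<Rightarrow> real" where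
  "dd d1 d2 d3 = sqrt (2*d1\<^sup>2*d2\<^sup>2 + 2*d1\<^sup>2*d3\<^sup>2 + 2*d2\<^sup>2*d3\<^sup>2 - d1^4 - d2^4 - d3^4)"

definition f1 where "f1 d1 d2 d3 t1 t2 t3 = (let d = dd d1 d2 d3 in
  d2 * sqrt (4 - d2\<^sup>2) * sin t2 * (d3 * d - (d1\<^sup>2 - d2\<^sup>2 + d3\<^sup>2) * sqrt (4 - d3\<^sup>2) * cos t3)
  - d3 * sqrt (4 - d3\<^sup>2) * sin t3 * (d2 * d - (d1\<^sup>2 + d2\<^sup>2 - d3\<^sup>2) * sqrt (4 - d2\<^sup>2) * cos t2))"

definition g1 where "g1 d1 d2 d3 t1 t2 t3 = (let d = dd d1 d2 d3 in
  sqrt (4 - d2\<^sup>2) * ((- d1\<^sup>2 + d2\<^sup>2 + d3\<^sup>2) / (2 * d2 * d3) * cos t2 * sin t3 + sin t2 * cos t3)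
  - d * sin t3 / (2 * d3))"

definition h1 where "h1 d1 d2 d3 t1 t2 t3 = (let d = dd d1 d2 d3 in
  sqrt (4 - d3\<^sup>2) * ((- d1\<^sup>2 + d2\<^sup>2 + d3\<^sup>2) / (2 * d2 * d3) * cos t3 * sin t2 + sin t3 * cos t2)
  - d * sin t2 / (2 * d2))"

definition f2 where "f2 d1 d2 d3 t1 t2 t3 = (let d = dd d1 d2 d3 in
  d3 * sqrt (4 - d3\<^sup>2) * sin t3 * (d1 * d - (d1\<^sup>2 + d2\<^sup>2 - d3\<^sup>2) * sqrt (4 - d1\<^sup>2) * cos t1)
  - d1 * sqrt (4 - d1\<^sup>2) * sin t1 * (d3 * d - (- d1\<^sup>2 + d2\<^sup>2 + d3\<^sup>2) * sqrt (4 - d3\<^sup>2) * cos t3))"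

definition g2 where "g2 d1 d2 d3 t1 t2 t3 = (let d = dd d1 d2 d3 in
  sqrt (4 - d3\<^sup>2) * ((d1\<^sup>2 - d2\<^sup>2 + d3\<^sup>2) / (2 * d1 * d3) * cos t3 * sin t1 + sin t3 * cos t1)
  - d * sin t1 / (2 * d1))"

definition h2 where "h2 d1 d2 d3 t1 t2 t3 = (let d = dd d1 d2 d3 in
  sqrt (4 - d1\<^sup>2) * ((d1\<^sup>2 - d2\<^sup>2 + d3\<^sup>2) / (2 * d1 * d3) * cos t1 * sin t3 + sin t1 * cos t3)
  - d * sin t3 / (2 * d3))"

definition f3 where "f3 d1 d2 d3 t1 t2 t3 = (let d = dd d1 d2 d3 in
  d1 * sqrt (4 - d1\<^sup>2) * sin t1 * (d2 * d - (- d1\<^sup>2 + d2\<^sup>2 + d3\<^sup>2) * sqrt (4 - d2\<^sup>2) * cos t2)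
  - d2 * sqrt (4 - d2\<^sup>2) * sin t2 * (d1 * d - (d1\<^sup>2 - d2\<^sup>2 + d3\<^sup>2) * sqrt (4 - d1\<^sup>2) * cos t1))"

definition g3 where "g3 d1 d2 d3 t1 t2 t3 = (let d = dd d1 d2 d3 in
  sqrt (4 - d1\<^sup>2) * ((d1\<^sup>2 + d2\<^sup>2 - d3\<^sup>2) / (2 * d1 * d2) * cos t1 * sin t2 + sin t1 * cos t2)
  - d * sin t2 / (2 * d2))"

definition h3 where "h3 d1 d2 d3 t1 t2 t3 = (let d = dd d1 d2 d3 in
  sqrt (4 - d2\<^sup>2) * ((d1\<^sup>2 + d2\<^sup>2 - d3\<^sup>2) / (2 * d1 * d2) * cos t2 * sin t1 + sin t2 * cos t1)
  - d * sin t1 / (2 * d1))"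

end

theory Submission
  imports Defs
begin


definition D4 :: "real^3 \<Rightarrow> real^3 \<Rightarrow> real^3 \<Rightarrow> real^3 \<Rightarrow> real" where
  "D4 a b c d = cross3 (b - a) (c - a) \<bullet> (d - a)"

lemma collinear_D4:
  assumes "collinear {a,b,c}" shows "D4 a b c p = 0"
proof -
  from assms[unfolded collinear_3_expand] show ?thesis
  proof
    assume "a = c" thus ?thesis by (simp add: D4_def cross3_simps)
  next
    assume "\<exists>u. b = u *\<^sub>R a + (1 - u) *\<^sub>R c"
    then obtain u where bu: "b = u *\<^sub>R a + (1 - u) *\<^sub>R c" by blast
    show ?thesis unfolding bu D4_def by (simp add: cross3_simps)
  qed
qed

lemma crossing:
  fixes a b c p q :: "real^3"
  defines "hp \<equiv> D4 a b c p" and "hq \<equiv> D4 a b c q"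
  assumes hpq: "hp * hq < 0"
    and xin: "p + (hp / (hp - hq)) *\<^sub>R (q - p) \<in> rel_interior (convex hull {a,b,c})"
  shows "hq * D4 p q a b > 0 \<and> hq * D4 p q b c > 0 \<and> hq * D4 p q c a > 0"
proof -
  have hp0: "hp \<noteq> 0" using hpq by auto
  have nc: "\<not> collinear {a,b,c}" using collinear_D4 hp0 hp_def by blast
  hence ind: "\<not> affine_dependent {a,b,c}" and dis: "a \<noteq> b" "a \<noteq> c" "b \<noteq> c"
    using collinear_3_eq_affine_dependent by blast+
  obtain u where upos: "\<forall>x\<in>{a,b,c}. 0 < u x" and usum: "sum u {a,b,c} = 1"
    and ux: "(\<Sum>x\<in>{a,b,c}. u x *\<^sub>R x) = p + (hp / (hp - hq)) *\<^sub>R (q - p)"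
    using xin unfolding rel_interior_convex_hull_explicit[OF ind] by blast
  define l where "l = hp / (hp - hq)"
  have lpos: "l > 0" unfolding l_def using hpq
    by (smt (verit, ccfv_SIG) divide_neg_neg divide_pos_pos mult_less_0_iff)
  have ua: "u a > 0" and ub: "u b > 0" and uc: "u c > 0" using upos by auto
  have s1: "u a + u b + u c = 1" using usum dis by simp
  have s2: "u a *\<^sub>R a + u b *\<^sub>R b + u c *\<^sub>R c = p + l *\<^sub>R (q - p)"
    using ux dis by (simp add: l_def add.assoc)
  have key: "l *\<^sub>R (q - p) = u a *\<^sub>R (a - p) + u b *\<^sub>R (b - p) + u c *\<^sub>R (c - p)"
  proof -
    have "u a *\<^sub>R (a - p) + u b *\<^sub>R (b - p) + u c *\<^sub>R (c - p)
          = (u a *\<^sub>R a + u b *\<^sub>R b + u c *\<^sub>R c) - (u a + u b + u c) *\<^sub>R p"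
      by (simp add: algebra_simps)
    also have "\<dots> = l *\<^sub>R (q - p)" using s1 s2 by simp
    finally show ?thesis by simp
  qed
  have e1: "l * D4 p q a b = - u c * hp"
  proof -
    have "l * D4 p q a b = cross3 (l *\<^sub>R (q - p)) (a - p) \<bullet> (b - p)"
      by (simp add: D4_def cross_mult_left)
    also have "\<dots> = cross3 (u a *\<^sub>R (a - p) + u b *\<^sub>R (b - p) + u c *\<^sub>R (c - p)) (a - p) \<bullet> (b - p)"
      using key by simp
    also have "\<dots> = - u c * hp" unfolding hp_def D4_def by (simp add: cross3_simps)
    finally show ?thesis .
  qed
  have e2: "l * D4 p q b c = - u a * hp"
  proof -
    have "l * D4 p q b c = cross3 (l *\<^sub>R (q - p)) (b - p) \<bullet> (c - p)"
      by (simp add: D4_def cross_mult_left)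
    also have "\<dots> = cross3 (u a *\<^sub>R (a - p) + u b *\<^sub>R (b - p) + u c *\<^sub>R (c - p)) (b - p) \<bullet> (c - p)"
      using key by simp
    also have "\<dots> = - u a * hp" unfolding hp_def D4_def by (simp add: cross3_simps)
    finally show ?thesis .
  qed
  have e3: "l * D4 p q c a = - u b * hp"
  proof -
    have "l * D4 p q c a = cross3 (l *\<^sub>R (q - p)) (c - p) \<bullet> (a - p)"
      by (simp add: D4_def cross_mult_left)
    also have "\<dots> = cross3 (u a *\<^sub>R (a - p) + u b *\<^sub>R (b - p) + u c *\<^sub>R (c - p)) (c - p) \<bullet> (a - p)"
      using key by simp
    also have "\<dots> = - u b * hp" unfolding hp_def D4_def by (simp add: cross3_simps)
    finally show ?thesis .
  qed
  have g: "\<And>k D. l * D = - k * hp \<Longrightarrow> k > 0 \<Longrightarrow> hq * D > 0"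
  proof -
    fix k D assume A: "l * D = - k * hp" "k > 0"
    have "l * (hq * D) = - k * (hp * hq)" using A(1) by (metis mult.left_commute mult.commute mult_minus_left)
    also have "\<dots> > 0" using A(2) hpq by (simp add: mult_pos_neg)
    finally show "hq * D > 0" using lpos by (simp add: zero_less_mult_iff)
  qed
  show ?thesis using g[OF e1 uc] g[OF e2 ua] g[OF e3 ub] by simp
qed

lemma D4_vert: "D4 a b c a = 0" "D4 a b c b = 0" "D4 a b c c = 0"
  by (simp_all add: D4_def cross3_simps)

lemma height_D4: "height v i x = D4 (vx v (i - 1)) (vx v i) (vx v (i + 1)) x"
  by (simp add: height_def tri_normal_def D4_def cross3_simps)

lemma tri_normal_diff: "tri_normal v i \<bullet> (q - p) =
    D4 (vx v (i - 1)) (vx v i) (vx v (i + 1)) q - D4 (vx v (i - 1)) (vx v i) (vx v (i + 1)) p"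
  by (simp add: tri_normal_def D4_def cross3_simps)

lemma sgn_int_cases: "sgn_int x = 1 \<and> x > 0 \<or> sgn_int x = -1 \<and> x < 0 \<or> sgn_int x = 0 \<and> x = 0"
  by (auto simp: sgn_int_def)

lemma ec_range: "edge_contrib v i j \<in> {-1,0,1}"
  unfolding edge_contrib_def Let_def sgn_int_def by auto

lemma ec_zero:
  assumes "D4 (vx v (i - 1)) (vx v i) (vx v (i + 1)) (vx v j) = 0 \<or>
           D4 (vx v (i - 1)) (vx v i) (vx v (i + 1)) (vx v (j + 1)) = 0"
  shows "edge_contrib v i j = 0"
  using assms unfolding edge_contrib_def Let_def height_D4 by auto

lemma ec_info:
  assumes "edge_contrib v i j \<noteq> 0" "a = vx v (i - 1)" "b = vx v i" "c = vx v (i + 1)"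
    "p = vx v j" "q = vx v (j + 1)"
  shows "edge_contrib v i j = sgn_int (D4 a b c q) \<and> D4 a b c p * D4 a b c q < 0 \<and>
    D4 a b c q * D4 p q a b > 0 \<and> D4 a b c q * D4 p q b c > 0 \<and> D4 a b c q * D4 p q c a > 0"
proof -
  have c1: "D4 a b c p * D4 a b c q < 0"
    and c2: "p + (D4 a b c p / (D4 a b c p - D4 a b c q)) *\<^sub>R (q - p) \<in> rel_interior (convex hull {a,b,c})"
    and c3: "edge_contrib v i j = sgn_int (D4 a b c q - D4 a b c p)"
    using assms(1) unfolding edge_contrib_def Let_def height_D4 tri_normal_diff open_tri_def assms(2-6)
    by (auto split: if_splits)
  have "sgn_int (D4 a b c q - D4 a b c p) = sgn_int (D4 a b c q)"
    using c1 unfolding sgn_int_def by (auto simp: mult_less_0_iff)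
  thus ?thesis using c1 c3 crossing[OF c1 c2] by simp
qed

lemma Delta_sum: "Delta v i = Some s \<Longrightarrow> s = (\<Sum>j\<in>{1..6}. edge_contrib v i j)"
  by (simp add: Delta_def split: if_splits)

lemma sum16: "(\<Sum>j\<in>{1..6::nat}. f j) = f 1 + f 2 + f 3 + f 4 + f 5 + (f 6 :: int)"
proof -
  have "{1..6::nat} = {1,2,3,4,5,6}" by auto
  thus ?thesis by simp
qed

lemma two_cases:
  fixes x y s :: int
  assumes "x \<in> {-1,0,1}" "y \<in> {-1,0,1}" "s = x + y" "s = 1 \<or> s = -1"
  shows "(x \<noteq> 0 \<and> x = s) \<or> (y \<noteq> 0 \<and> y = s)"
  using assms by auto


lemma vx0: "vx v 0 = v 6"
proof -
  have "((0::nat) + 5) mod 6 + 1 = 6" by simp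
  thus ?thesis by (simp only: vx_def)
qed

lemma vx1: "vx v 1 = v 1"
proof -
  have "((1::nat) + 5) mod 6 + 1 = 1" by simp
  thus ?thesis by (simp only: vx_def)
qed

lemma vx2: "vx v 2 = v 2"
proof -
  have "((2::nat) + 5) mod 6 + 1 = 2" by simp
  thus ?thesis by (simp only: vx_def)
qed

lemma vx3: "vx v 3 = v 3"
proof -
  have "((3::nat) + 5) mod 6 + 1 = 3" by simp
  thus ?thesis by (simp only: vx_def)
qed

lemma vx4: "vx v 4 = v 4"
proof -
  have "((4::nat) + 5) mod 6 + 1 = 4" by simp
  thus ?thesis by (simp only: vx_def)
qed

lemma vx5: "vx v 5 = v 5"
proof -
  have "((5::nat) + 5) mod 6 + 1 = 5" by simp
  thus ?thesis by (simp only: vx_def)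
qed

lemma vx6: "vx v 6 = v 6"
proof -
  have "((6::nat) + 5) mod 6 + 1 = 6" by simp
  thus ?thesis by (simp only: vx_def)
qed

lemma vx7: "vx v 7 = v 1"
proof -
  have "((7::nat) + 5) mod 6 + 1 = 1" by simp
  thus ?thesis by (simp only: vx_def)
qed

lemmas vxs0 = vx0 vx1 vx2 vx3 vx4 vx5 vx6 vx7

lemma nateqs: "(2::nat) - 1 = 1" "(4::nat) - 1 = 3" "(6::nat) - 1 = 5" "(1::nat) + 1 = 2" "(2::nat) + 1 = 3"
  "(3::nat) + 1 = 4" "(4::nat) + 1 = 5" "(5::nat) + 1 = 6" "(6::nat) + 1 = 7"
  by simp_all

lemmas vxs = vxs0 nateqs

lemma sign_helper:
  fixes h hp x y z :: real
  assumes "sgn_int h = s" "s = 1 \<or> s = -1" "hp * h < 0" "h * x > 0" "h * y > 0" "h * z > 0"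
  shows "(s = 1 \<and> h > 0 \<and> hp < 0 \<and> x > 0 \<and> y > 0 \<and> z > 0) \<or>
         (s = -1 \<and> h < 0 \<and> hp > 0 \<and> x < 0 \<and> y < 0 \<and> z < 0)"
proof (cases "h > 0")
  case True
  thus ?thesis using assms by (auto simp: sgn_int_def zero_less_mult_iff mult_less_0_iff)
next
  case False
  hence "h < 0" using assms(3) by (cases "h = 0") auto
  thus ?thesis using assms by (auto simp: sgn_int_def zero_less_mult_iff mult_less_0_iff)
qed


lemma tri2:
  assumes "Delta v 2 = Some s" "s = 1 \<or> s = -1"
  shows "(s = 1 \<and> D4 (v 1) (v 2) (v 3) (v 5) > 0 \<and> D4 (v 1) (v 2) (v 3) (v 4) < 0 \<and> D4 (v 1) (v 2) (v 4) (v 5) > 0 \<and> D4 (v 2) (v 3) (v 4) (v 5) > 0 \<and> D4 (v 1) (v 3) (v 4) (v 5) < 0) \<or>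
   (s = -1 \<and> D4 (v 1) (v 2) (v 3) (v 5) < 0 \<and> D4 (v 1) (v 2) (v 3) (v 4) > 0 \<and> D4 (v 1) (v 2) (v 4) (v 5) < 0 \<and> D4 (v 2) (v 3) (v 4) (v 5) < 0 \<and> D4 (v 1) (v 3) (v 4) (v 5) > 0) \<or>
   (s = 1 \<and> D4 (v 1) (v 2) (v 3) (v 6) > 0 \<and> D4 (v 1) (v 2) (v 3) (v 5) < 0 \<and> D4 (v 1) (v 2) (v 5) (v 6) > 0 \<and> D4 (v 2) (v 3) (v 5) (v 6) > 0 \<and> D4 (v 1) (v 3) (v 5) (v 6) < 0) \<or>
   (s = -1 \<and> D4 (v 1) (v 2) (v 3) (v 6) < 0 \<and> D4 (v 1) (v 2) (v 3) (v 5) > 0 \<and> D4 (v 1) (v 2) (v 5) (v 6) < 0 \<and> D4 (v 2) (v 3) (v 5) (v 6) < 0 \<and> D4 (v 1) (v 3) (v 5) (v 6) > 0)"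
proof -
  have "edge_contrib v 2 1 = 0" "edge_contrib v 2 2 = 0" "edge_contrib v 2 3 = 0" "edge_contrib v 2 6 = 0"
    by (rule ec_zero; simp only: vxs D4_vert simp_thms)+
  hence sum: "s = edge_contrib v 2 4 + edge_contrib v 2 5"
    using Delta_sum[OF assms(1)] sum16 by simp
  have perms: "D4 (v 4) (v 5) (v 1) (v 2) = D4 (v 1) (v 2) (v 4) (v 5)" "D4 (v 4) (v 5) (v 2) (v 3) = D4 (v 2) (v 3) (v 4) (v 5)" "D4 (v 4) (v 5) (v 3) (v 1) = - D4 (v 1) (v 3) (v 4) (v 5)" "D4 (v 5) (v 6) (v 1) (v 2) = D4 (v 1) (v 2) (v 5) (v 6)" "D4 (v 5) (v 6) (v 2) (v 3) = D4 (v 2) (v 3) (v 5) (v 6)" "D4 (v 5) (v 6) (v 3) (v 1) = - D4 (v 1) (v 3) (v 5) (v 6)"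
    by (simp_all add: D4_def cross3_simps)
  from two_cases[OF ec_range ec_range sum assms(2)] show ?thesis
  proof
    assume H: "edge_contrib v 2 4 \<noteq> 0 \<and> edge_contrib v 2 4 = s"
    have I: "edge_contrib v 2 4 = sgn_int (D4 (v 1) (v 2) (v 3) (v 5)) \<and> D4 (v 1) (v 2) (v 3) (v 4) * D4 (v 1) (v 2) (v 3) (v 5) < 0 \<and> D4 (v 1) (v 2) (v 3) (v 5) * D4 (v 4) (v 5) (v 1) (v 2) > 0 \<and> D4 (v 1) (v 2) (v 3) (v 5) * D4 (v 4) (v 5) (v 2) (v 3) > 0 \<and> D4 (v 1) (v 2) (v 3) (v 5) * D4 (v 4) (v 5) (v 3) (v 1) > 0"
      using ec_info[OF H[THEN conjunct1], of "v 1" "v 2" "v 3" "v 4" "v 5"] by (simp only: vxs simp_thms)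
    have S: "(s = 1 \<and> D4 (v 1) (v 2) (v 3) (v 5) > 0 \<and> D4 (v 1) (v 2) (v 3) (v 4) < 0 \<and> D4 (v 4) (v 5) (v 1) (v 2) > 0 \<and> D4 (v 4) (v 5) (v 2) (v 3) > 0 \<and> D4 (v 4) (v 5) (v 3) (v 1) > 0) \<or>
       (s = -1 \<and> D4 (v 1) (v 2) (v 3) (v 5) < 0 \<and> D4 (v 1) (v 2) (v 3) (v 4) > 0 \<and> D4 (v 4) (v 5) (v 1) (v 2) < 0 \<and> D4 (v 4) (v 5) (v 2) (v 3) < 0 \<and> D4 (v 4) (v 5) (v 3) (v 1) < 0)"
      by (rule sign_helper) (use I H assms(2) in simp_all)
    show ?thesis using S unfolding perms by auto
  next
    assume H: "edge_contrib v 2 5 \<noteq> 0 \<and> edge_contrib v 2 5 = s"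
    have I: "edge_contrib v 2 5 = sgn_int (D4 (v 1) (v 2) (v 3) (v 6)) \<and> D4 (v 1) (v 2) (v 3) (v 5) * D4 (v 1) (v 2) (v 3) (v 6) < 0 \<and> D4 (v 1) (v 2) (v 3) (v 6) * D4 (v 5) (v 6) (v 1) (v 2) > 0 \<and> D4 (v 1) (v 2) (v 3) (v 6) * D4 (v 5) (v 6) (v 2) (v 3) > 0 \<and> D4 (v 1) (v 2) (v 3) (v 6) * D4 (v 5) (v 6) (v 3) (v 1) > 0"
      using ec_info[OF H[THEN conjunct1], of "v 1" "v 2" "v 3" "v 5" "v 6"] by (simp only: vxs simp_thms)
    have S: "(s = 1 \<and> D4 (v 1) (v 2) (v 3) (v 6) > 0 \<and> D4 (v 1) (v 2) (v 3) (v 5) < 0 \<and> D4 (v 5) (v 6) (v 1) (v 2) > 0 \<and> D4 (v 5) (v 6) (v 2) (v 3) > 0 \<and> D4 (v 5) (v 6) (v 3) (v 1) > 0) \<or>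
       (s = -1 \<and> D4 (v 1) (v 2) (v 3) (v 6) < 0 \<and> D4 (v 1) (v 2) (v 3) (v 5) > 0 \<and> D4 (v 5) (v 6) (v 1) (v 2) < 0 \<and> D4 (v 5) (v 6) (v 2) (v 3) < 0 \<and> D4 (v 5) (v 6) (v 3) (v 1) < 0)"
      by (rule sign_helper) (use I H assms(2) in simp_all)
    show ?thesis using S unfolding perms by auto
  qed
qed

lemma tri4:
  assumes "Delta v 4 = Some s" "s = 1 \<or> s = -1"
  shows "(s = 1 \<and> D4 (v 1) (v 3) (v 4) (v 5) < 0 \<and> D4 (v 3) (v 4) (v 5) (v 6) < 0 \<and> D4 (v 1) (v 3) (v 4) (v 6) < 0 \<and> D4 (v 1) (v 4) (v 5) (v 6) < 0 \<and> D4 (v 1) (v 3) (v 5) (v 6) > 0) \<or>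
   (s = -1 \<and> D4 (v 1) (v 3) (v 4) (v 5) > 0 \<and> D4 (v 3) (v 4) (v 5) (v 6) > 0 \<and> D4 (v 1) (v 3) (v 4) (v 6) > 0 \<and> D4 (v 1) (v 4) (v 5) (v 6) > 0 \<and> D4 (v 1) (v 3) (v 5) (v 6) < 0) \<or>
   (s = 1 \<and> D4 (v 2) (v 3) (v 4) (v 5) < 0 \<and> D4 (v 1) (v 3) (v 4) (v 5) > 0 \<and> D4 (v 1) (v 2) (v 3) (v 4) > 0 \<and> D4 (v 1) (v 2) (v 4) (v 5) > 0 \<and> D4 (v 1) (v 2) (v 3) (v 5) < 0) \<or>
   (s = -1 \<and> D4 (v 2) (v 3) (v 4) (v 5) > 0 \<and> D4 (v 1) (v 3) (v 4) (v 5) < 0 \<and> D4 (v 1) (v 2) (v 3) (v 4) < 0 \<and> D4 (v 1) (v 2) (v 4) (v 5) < 0 \<and> D4 (v 1) (v 2) (v 3) (v 5) > 0)"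
proof -
  have "edge_contrib v 4 2 = 0" "edge_contrib v 4 3 = 0" "edge_contrib v 4 4 = 0" "edge_contrib v 4 5 = 0"
    by (rule ec_zero; simp only: vxs D4_vert simp_thms)+
  hence sum: "s = edge_contrib v 4 6 + edge_contrib v 4 1"
    using Delta_sum[OF assms(1)] sum16 by simp
  have perms: "D4 (v 1) (v 2) (v 5) (v 3) = - D4 (v 1) (v 2) (v 3) (v 5)" "D4 (v 3) (v 4) (v 5) (v 1) = - D4 (v 1) (v 3) (v 4) (v 5)" "D4 (v 3) (v 4) (v 5) (v 2) = - D4 (v 2) (v 3) (v 4) (v 5)" "D4 (v 6) (v 1) (v 3) (v 4) = - D4 (v 1) (v 3) (v 4) (v 6)" "D4 (v 6) (v 1) (v 4) (v 5) = - D4 (v 1) (v 4) (v 5) (v 6)" "D4 (v 6) (v 1) (v 5) (v 3) = D4 (v 1) (v 3) (v 5) (v 6)"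
    by (simp_all add: D4_def cross3_simps)
  from two_cases[OF ec_range ec_range sum assms(2)] show ?thesis
  proof
    assume H: "edge_contrib v 4 6 \<noteq> 0 \<and> edge_contrib v 4 6 = s"
    have I: "edge_contrib v 4 6 = sgn_int (D4 (v 3) (v 4) (v 5) (v 1)) \<and> D4 (v 3) (v 4) (v 5) (v 6) * D4 (v 3) (v 4) (v 5) (v 1) < 0 \<and> D4 (v 3) (v 4) (v 5) (v 1) * D4 (v 6) (v 1) (v 3) (v 4) > 0 \<and> D4 (v 3) (v 4) (v 5) (v 1) * D4 (v 6) (v 1) (v 4) (v 5) > 0 \<and> D4 (v 3) (v 4) (v 5) (v 1) * D4 (v 6) (v 1) (v 5) (v 3) > 0"
      using ec_info[OF H[THEN conjunct1], of "v 3" "v 4" "v 5" "v 6" "v 1"] by (simp only: vxs simp_thms)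
    have S: "(s = 1 \<and> D4 (v 3) (v 4) (v 5) (v 1) > 0 \<and> D4 (v 3) (v 4) (v 5) (v 6) < 0 \<and> D4 (v 6) (v 1) (v 3) (v 4) > 0 \<and> D4 (v 6) (v 1) (v 4) (v 5) > 0 \<and> D4 (v 6) (v 1) (v 5) (v 3) > 0) \<or>
       (s = -1 \<and> D4 (v 3) (v 4) (v 5) (v 1) < 0 \<and> D4 (v 3) (v 4) (v 5) (v 6) > 0 \<and> D4 (v 6) (v 1) (v 3) (v 4) < 0 \<and> D4 (v 6) (v 1) (v 4) (v 5) < 0 \<and> D4 (v 6) (v 1) (v 5) (v 3) < 0)"
      by (rule sign_helper) (use I H assms(2) in simp_all)
    show ?thesis using S unfolding perms by auto
  next
    assume H: "edge_contrib v 4 1 \<noteq> 0 \<and> edge_contrib v 4 1 = s"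
    have I: "edge_contrib v 4 1 = sgn_int (D4 (v 3) (v 4) (v 5) (v 2)) \<and> D4 (v 3) (v 4) (v 5) (v 1) * D4 (v 3) (v 4) (v 5) (v 2) < 0 \<and> D4 (v 3) (v 4) (v 5) (v 2) * D4 (v 1) (v 2) (v 3) (v 4) > 0 \<and> D4 (v 3) (v 4) (v 5) (v 2) * D4 (v 1) (v 2) (v 4) (v 5) > 0 \<and> D4 (v 3) (v 4) (v 5) (v 2) * D4 (v 1) (v 2) (v 5) (v 3) > 0"
      using ec_info[OF H[THEN conjunct1], of "v 3" "v 4" "v 5" "v 1" "v 2"] by (simp only: vxs simp_thms)
    have S: "(s = 1 \<and> D4 (v 3) (v 4) (v 5) (v 2) > 0 \<and> D4 (v 3) (v 4) (v 5) (v 1) < 0 \<and> D4 (v 1) (v 2) (v 3) (v 4) > 0 \<and> D4 (v 1) (v 2) (v 4) (v 5) > 0 \<and> D4 (v 1) (v 2) (v 5) (v 3) > 0) \<or>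
       (s = -1 \<and> D4 (v 3) (v 4) (v 5) (v 2) < 0 \<and> D4 (v 3) (v 4) (v 5) (v 1) > 0 \<and> D4 (v 1) (v 2) (v 3) (v 4) < 0 \<and> D4 (v 1) (v 2) (v 4) (v 5) < 0 \<and> D4 (v 1) (v 2) (v 5) (v 3) < 0)"
      by (rule sign_helper) (use I H assms(2) in simp_all)
    show ?thesis using S unfolding perms by auto
  qed
qed

lemma tri6:
  assumes "Delta v 6 = Some s" "s = 1 \<or> s = -1"
  shows "(s = 1 \<and> D4 (v 1) (v 3) (v 5) (v 6) > 0 \<and> D4 (v 1) (v 2) (v 5) (v 6) < 0 \<and> D4 (v 2) (v 3) (v 5) (v 6) > 0 \<and> D4 (v 1) (v 2) (v 3) (v 6) < 0 \<and> D4 (v 1) (v 2) (v 3) (v 5) > 0) \<or>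
   (s = -1 \<and> D4 (v 1) (v 3) (v 5) (v 6) < 0 \<and> D4 (v 1) (v 2) (v 5) (v 6) > 0 \<and> D4 (v 2) (v 3) (v 5) (v 6) < 0 \<and> D4 (v 1) (v 2) (v 3) (v 6) > 0 \<and> D4 (v 1) (v 2) (v 3) (v 5) < 0) \<or>
   (s = 1 \<and> D4 (v 1) (v 4) (v 5) (v 6) > 0 \<and> D4 (v 1) (v 3) (v 5) (v 6) < 0 \<and> D4 (v 3) (v 4) (v 5) (v 6) > 0 \<and> D4 (v 1) (v 3) (v 4) (v 6) < 0 \<and> D4 (v 1) (v 3) (v 4) (v 5) > 0) \<or>
   (s = -1 \<and> D4 (v 1) (v 4) (v 5) (v 6) < 0 \<and> D4 (v 1) (v 3) (v 5) (v 6) > 0 \<and> D4 (v 3) (v 4) (v 5) (v 6) < 0 \<and> D4 (v 1) (v 3) (v 4) (v 6) > 0 \<and> D4 (v 1) (v 3) (v 4) (v 5) < 0)"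
proof -
  have "edge_contrib v 6 1 = 0" "edge_contrib v 6 4 = 0" "edge_contrib v 6 5 = 0" "edge_contrib v 6 6 = 0"
    by (rule ec_zero; simp only: vxs D4_vert simp_thms)+
  hence sum: "s = edge_contrib v 6 2 + edge_contrib v 6 3"
    using Delta_sum[OF assms(1)] sum16 by simp
  have perms: "D4 (v 2) (v 3) (v 1) (v 5) = D4 (v 1) (v 2) (v 3) (v 5)" "D4 (v 2) (v 3) (v 6) (v 1) = - D4 (v 1) (v 2) (v 3) (v 6)" "D4 (v 3) (v 4) (v 1) (v 5) = D4 (v 1) (v 3) (v 4) (v 5)" "D4 (v 3) (v 4) (v 6) (v 1) = - D4 (v 1) (v 3) (v 4) (v 6)" "D4 (v 5) (v 6) (v 1) (v 2) = D4 (v 1) (v 2) (v 5) (v 6)" "D4 (v 5) (v 6) (v 1) (v 3) = D4 (v 1) (v 3) (v 5) (v 6)" "D4 (v 5) (v 6) (v 1) (v 4) = D4 (v 1) (v 4) (v 5) (v 6)"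
    by (simp_all add: D4_def cross3_simps)
  from two_cases[OF ec_range ec_range sum assms(2)] show ?thesis
  proof
    assume H: "edge_contrib v 6 2 \<noteq> 0 \<and> edge_contrib v 6 2 = s"
    have I: "edge_contrib v 6 2 = sgn_int (D4 (v 5) (v 6) (v 1) (v 3)) \<and> D4 (v 5) (v 6) (v 1) (v 2) * D4 (v 5) (v 6) (v 1) (v 3) < 0 \<and> D4 (v 5) (v 6) (v 1) (v 3) * D4 (v 2) (v 3) (v 5) (v 6) > 0 \<and> D4 (v 5) (v 6) (v 1) (v 3) * D4 (v 2) (v 3) (v 6) (v 1) > 0 \<and> D4 (v 5) (v 6) (v 1) (v 3) * D4 (v 2) (v 3) (v 1) (v 5) > 0"
      using ec_info[OF H[THEN conjunct1], of "v 5" "v 6" "v 1" "v 2" "v 3"] by (simp only: vxs simp_thms)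
    have S: "(s = 1 \<and> D4 (v 5) (v 6) (v 1) (v 3) > 0 \<and> D4 (v 5) (v 6) (v 1) (v 2) < 0 \<and> D4 (v 2) (v 3) (v 5) (v 6) > 0 \<and> D4 (v 2) (v 3) (v 6) (v 1) > 0 \<and> D4 (v 2) (v 3) (v 1) (v 5) > 0) \<or>
       (s = -1 \<and> D4 (v 5) (v 6) (v 1) (v 3) < 0 \<and> D4 (v 5) (v 6) (v 1) (v 2) > 0 \<and> D4 (v 2) (v 3) (v 5) (v 6) < 0 \<and> D4 (v 2) (v 3) (v 6) (v 1) < 0 \<and> D4 (v 2) (v 3) (v 1) (v 5) < 0)"
      by (rule sign_helper) (use I H assms(2) in simp_all)
    show ?thesis using S unfolding perms by auto
  next
    assume H: "edge_contrib v 6 3 \<noteq> 0 \<and> edge_contrib v 6 3 = s"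
    have I: "edge_contrib v 6 3 = sgn_int (D4 (v 5) (v 6) (v 1) (v 4)) \<and> D4 (v 5) (v 6) (v 1) (v 3) * D4 (v 5) (v 6) (v 1) (v 4) < 0 \<and> D4 (v 5) (v 6) (v 1) (v 4) * D4 (v 3) (v 4) (v 5) (v 6) > 0 \<and> D4 (v 5) (v 6) (v 1) (v 4) * D4 (v 3) (v 4) (v 6) (v 1) > 0 \<and> D4 (v 5) (v 6) (v 1) (v 4) * D4 (v 3) (v 4) (v 1) (v 5) > 0"
      using ec_info[OF H[THEN conjunct1], of "v 5" "v 6" "v 1" "v 3" "v 4"] by (simp only: vxs simp_thms)
    have S: "(s = 1 \<and> D4 (v 5) (v 6) (v 1) (v 4) > 0 \<and> D4 (v 5) (v 6) (v 1) (v 3) < 0 \<and> D4 (v 3) (v 4) (v 5) (v 6) > 0 \<and> D4 (v 3) (v 4) (v 6) (v 1) > 0 \<and> D4 (v 3) (v 4) (v 1) (v 5) > 0) \<or>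
       (s = -1 \<and> D4 (v 5) (v 6) (v 1) (v 4) < 0 \<and> D4 (v 5) (v 6) (v 1) (v 3) > 0 \<and> D4 (v 3) (v 4) (v 5) (v 6) < 0 \<and> D4 (v 3) (v 4) (v 6) (v 1) < 0 \<and> D4 (v 3) (v 4) (v 1) (v 5) < 0)"
      by (rule sign_helper) (use I H assms(2) in simp_all)
    show ?thesis using S unfolding perms by auto
  qed
qed


lemma unit3:
  fixes a b c :: int
  assumes "a * b * c = -1"
  shows "(a = 1 \<or> a = -1) \<and> (b = 1 \<or> b = -1) \<and> (c = 1 \<or> c = -1)"
proof -
  have "a dvd 1" "b dvd 1" "c dvd 1"
    using assms by (metis dvd_minus_iff dvd_triv_left dvd_triv_right mult.assoc mult.commute)+
  thus ?thesis unfolding zdvd1_eq by auto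
qed

lemma comb:
  assumes "JCC v = Some (-1, 1)"
  shows "D4 (v 1) (v 3) (v 4) (v 6) > 0 \<and> D4 (v 1) (v 4) (v 5) (v 6) < 0 \<and> D4 (v 3) (v 4) (v 5) (v 6) < 0 \<and>
    D4 (v 2) (v 3) (v 5) (v 6) < 0 \<and> D4 (v 1) (v 2) (v 3) (v 6) < 0 \<and> D4 (v 1) (v 2) (v 5) (v 6) < 0 \<and>
    D4 (v 1) (v 2) (v 4) (v 5) < 0 \<and> D4 (v 2) (v 3) (v 4) (v 5) > 0 \<and> D4 (v 1) (v 2) (v 3) (v 4) < 0"
proof -
  obtain a b c where abc: "Delta v 2 = Some a" "Delta v 4 = Some b" "Delta v 6 = Some c"
    and prod: "a * b * c = -1" and cu: "a\<^sup>2 * b\<^sup>2 * c\<^sup>2 * curl v = 1"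
    using assms unfolding JCC_def
    by (auto split: option.splits)
  have u: "(a = 1 \<or> a = -1) \<and> (b = 1 \<or> b = -1) \<and> (c = 1 \<or> c = -1)" using unit3[OF prod] .
  have "a\<^sup>2 * b\<^sup>2 * c\<^sup>2 = 1" using u by auto
  hence "curl v = 1" using cu by simp
  hence "cross3 (v 3 - v 1) (v 5 - v 1) \<bullet> (v 2 - v 1) > 0"
    unfolding curl_def sgn_int_def by (auto split: if_splits)
  moreover have "cross3 (v 3 - v 1) (v 5 - v 1) \<bullet> (v 2 - v 1) = D4 (v 1) (v 2) (v 3) (v 5)"
    by (simp add: D4_def cross3_simps)
  ultimately have curl: "D4 (v 1) (v 2) (v 3) (v 5) > 0" by simp
  have ua: "a = 1 \<or> a = -1" and ub: "b = 1 \<or> b = -1" and uc: "c = 1 \<or> c = -1" using u by auto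
  note T2 = tri2[OF abc(1) ua] and T4 = tri4[OF abc(2) ub] and T6 = tri6[OF abc(3) uc]
  show ?thesis using T2 T4 T6 prod curl by auto
qed



lemma D4_expand: "D4 p q r s =
  (q$1 - p$1) * ((r$2 - p$2) * (s$3 - p$3) - (r$3 - p$3) * (s$2 - p$2))
  - (q$2 - p$2) * ((r$1 - p$1) * (s$3 - p$3) - (r$3 - p$3) * (s$1 - p$1))
  + (q$3 - p$3) * ((r$1 - p$1) * (s$2 - p$2) - (r$2 - p$2) * (s$1 - p$1))"
  by (simp add: D4_def cross3_simps)

lemma ident_all:
  fixes v :: "nat \<Rightarrow> real^3"
  assumes v1: "v 1 $ 1 = 0" "v 1 $ 2 = 0" "v 1 $ 3 = 0"
    and v3: "v 3 $ 1 = a" "v 3 $ 2 = 0" "v 3 $ 3 = 0"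
    and v5: "v 5 $ 1 = x5" "v 5 $ 2 = y5" "v 5 $ 3 = 0"
    and v2: "v 2 $ 1 = a/2" "v 2 $ 2 = S1/2 * cos t1" "v 2 $ 3 = S1/2 * sin t1"
    and v4: "v 4 $ 1 = (a + x5)/2 - S2/2 * cos t2 * y5/d2" "v 4 $ 2 = y5/2 + S2/2*cos t2*(x5-a)/d2"
        "v 4 $ 3 = S2/2 * sin t2"
    and v6: "v 6 $ 1 = x5/2 + S3/2*cos t3*y5/d3" "v 6 $ 2 = y5/2 - S3/2*cos t3*x5/d3"
        "v 6 $ 3 = S3/2 * sin t3"
    and d1: "d1 = a" and e2: "d2^2 = (x5-a)^2+y5^2" and e3: "d3^2 = x5^2+y5^2"
    and dd: "dd d1 d2 d3 = 2*a*y5"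
    and S: "sqrt (4 - d1^2) = S1" "sqrt (4 - d2^2) = S2" "sqrt (4 - d3^2) = S3"
    and nz: "a \<noteq> 0" "d2 \<noteq> 0" "d3 \<noteq> 0" "S1 \<noteq> 0" "S2 \<noteq> 0" "S3 \<noteq> 0"
  shows "f1 d1 d2 d3 t1 t2 t3 = -8*d2*d3*D4 (v 1) (v 3) (v 4) (v 6)" 
    "g1 d1 d2 d3 t1 t2 t3 * (d3*S3) = -4*D4 (v 5) (v 6) (v 1) (v 4)" 
    "h1 d1 d2 d3 t1 t2 t3 * (d2*S2) = -4*D4 (v 3) (v 4) (v 5) (v 6)" 
    "f2 d1 d2 d3 t1 t2 t3 = 8*d1*d3*D4 (v 2) (v 3) (v 5) (v 6)" 
    "g2 d1 d2 d3 t1 t2 t3 * (d1*S1) = -4*D4 (v 1) (v 2) (v 3) (v 6)" 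
    "h2 d1 d2 d3 t1 t2 t3 * (d3*S3) = -4*D4 (v 5) (v 6) (v 1) (v 2)" 
    "f3 d1 d2 d3 t1 t2 t3 = 8*d1*d2*D4 (v 1) (v 2) (v 4) (v 5)" 
    "g3 d1 d2 d3 t1 t2 t3 * (d2*S2) = -4*D4 (v 3) (v 4) (v 5) (v 2)" 
    "h3 d1 d2 d3 t1 t2 t3 * (d1*S1) = -4*D4 (v 1) (v 2) (v 3) (v 4)"
proof -
  have i: "a * inverse a = 1" "d2 * inverse d2 = 1" "d3 * inverse d3 = 1"
    "S1 * inverse S1 = 1" "S2 * inverse S2 = 1" "S3 * inverse S3 = 1" "2 * inverse (2::real) = 1"
    using nz by auto
  have dd': "dd a d2 d3 = 2*a*y5" using dd d1 by simp
  have S1': "sqrt (4 - a^2) = S1" using S(1) d1 by simp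
  define h where "h = inverse (2::real)"
  have hh: "2 * h = 1" unfolding h_def by simp
  note U = Let_def S S1' d1 dd' D4_expand v1 v2 v3 v4 v5 v6 d1 divide_inverse inverse_mult_distrib h_def[symmetric]
  show "f1 d1 d2 d3 t1 t2 t3 = -8*d2*d3*D4 (v 1) (v 3) (v 4) (v 6)"
    unfolding f1_def U using e2 e3 i hh by algebra
  show "g1 d1 d2 d3 t1 t2 t3 * (d3*S3) = -4*D4 (v 5) (v 6) (v 1) (v 4)"
    unfolding g1_def U using e2 e3 i hh by algebra
  show "h1 d1 d2 d3 t1 t2 t3 * (d2*S2) = -4*D4 (v 3) (v 4) (v 5) (v 6)"
    unfolding h1_def U using e2 e3 i hh by algebra
  show "f2 d1 d2 d3 t1 t2 t3 = 8*d1*d3*D4 (v 2) (v 3) (v 5) (v 6)"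
    unfolding f2_def U using e2 e3 i hh by algebra
  show "g2 d1 d2 d3 t1 t2 t3 * (d1*S1) = -4*D4 (v 1) (v 2) (v 3) (v 6)"
    unfolding g2_def U using e2 e3 i hh by algebra
  show "h2 d1 d2 d3 t1 t2 t3 * (d3*S3) = -4*D4 (v 5) (v 6) (v 1) (v 2)"
    unfolding h2_def U using e2 e3 i hh by algebra
  show "f3 d1 d2 d3 t1 t2 t3 = 8*d1*d2*D4 (v 1) (v 2) (v 4) (v 5)"
    unfolding f3_def U using e2 e3 i hh by algebra
  show "g3 d1 d2 d3 t1 t2 t3 * (d2*S2) = -4*D4 (v 3) (v 4) (v 5) (v 2)"
    unfolding g3_def U using e2 e3 i hh by algebra
  show "h3 d1 d2 d3 t1 t2 t3 * (d1*S1) = -4*D4 (v 1) (v 2) (v 3) (v 4)"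
    unfolding h3_def U using e2 e3 i hh by algebra
qed




lemma perp_comp:
  fixes a b c :: "real^3"
  assumes K: "K > 0"
    and w1: "((c - a) - (((c - a) \<bullet> (b - a)) / ((b - a) \<bullet> (b - a))) *\<^sub>R (b - a))$1 = K * u1"
    and w2: "((c - a) - (((c - a) \<bullet> (b - a)) / ((b - a) \<bullet> (b - a))) *\<^sub>R (b - a))$2 = K * u2"
    and w3: "((c - a) - (((c - a) \<bullet> (b - a)) / ((b - a) \<bullet> (b - a))) *\<^sub>R (b - a))$3 = K * u3"
    and un: "u1^2 + u2^2 + u3^2 = 1"
  shows "perp_toward a b c = vector [u1, u2, u3]"
proof -
  define w where "w = (c - a) - (((c - a) \<bullet> (b - a)) / ((b - a) \<bullet> (b - a))) *\<^sub>R (b - a)"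
  have wK: "w = K *\<^sub>R vector [u1, u2, u3]"
    using w1 w2 w3 unfolding w_def[symmetric] by (simp add: vec_eq_iff forall_3)
  have nu: "norm (vector [u1, u2, u3] :: real^3) = 1"
    unfolding norm_eq_1 using un by (simp add: inner_vec_def sum_3 power2_eq_square)
  have nw: "norm w = K" using wK nu K by simp
  show ?thesis unfolding perp_toward_def Let_def w_def[symmetric] nw using wK K by simp
qed

lemma angle_comp:
  assumes "angle_coord a b c w di th" "perp_toward a b c = vector [u1, u2, u3]"
  shows "w$1 = (a$1 + b$1)/2 + sqrt (4 - di^2)/2 * (cos th * u1)"
    "w$2 = (a$2 + b$2)/2 + sqrt (4 - di^2)/2 * (cos th * u2)"
    "w$3 = (a$3 + b$3)/2 + sqrt (4 - di^2)/2 * (cos th * u3 + sin th)"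
  using assms unfolding angle_coord_def midpoint_def ez_def by auto

lemma dist3: "dist (x::real^3) y = sqrt ((x$1-y$1)^2 + (x$2-y$2)^2 + (x$3-y$3)^2)"
  by (simp add: dist_norm norm_eq_sqrt_inner inner_vec_def sum_3 power2_eq_square)

lemma inner3: "(x::real^3) \<bullet> y = x$1*y$1 + x$2*y$2 + x$3*y$3"
  by (simp add: inner_vec_def sum_3)


theorem mainTheorem8:
  fixes v :: "nat \<Rightarrow> real^3" and d1 d2 d3 t1 t2 t3 :: real
  assumes "equilateral_hex v" and "embedded_hex v" and "standard_position v"
    and "\<not> collinear {v 1, v 3, v 5}"
    and "d1 = dist (v 3) (v 1)" and "d2 = dist (v 5) (v 3)" and "d3 = dist (v 1) (v 5)"
    and "0 < d1" and "d1 < 2" and "0 < d2" and "d2 < 2" and "0 < d3" and "d3 < 2"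
    and "angle_coord (v 1) (v 3) (v 5) (v 2) d1 t1"
    and "angle_coord (v 3) (v 5) (v 1) (v 4) d2 t2"
    and "angle_coord (v 5) (v 1) (v 3) (v 6) d3 t3"
    and "JCC v = Some (-1, 1)"
  shows "f1 d1 d2 d3 t1 t2 t3 < 0 \<and> g1 d1 d2 d3 t1 t2 t3 > 0 \<and> h1 d1 d2 d3 t1 t2 t3 > 0 \<and>
         f2 d1 d2 d3 t1 t2 t3 < 0 \<and> g2 d1 d2 d3 t1 t2 t3 > 0 \<and> h2 d1 d2 d3 t1 t2 t3 > 0 \<and>
         f3 d1 d2 d3 t1 t2 t3 < 0 \<and> g3 d1 d2 d3 t1 t2 t3 > 0 \<and> h3 d1 d2 d3 t1 t2 t3 > 0"
proof -
  note sp = assms(3)[unfolded standard_position_def]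
  define a where "a = v 3 $ 1"
  define x5 where "x5 = v 5 $ 1"
  define y5 where "y5 = v 5 $ 2"
  have v1vec: "v 1 = 0" using sp by auto
  have v1: "v 1 $ 1 = 0" "v 1 $ 2 = 0" "v 1 $ 3 = 0" unfolding v1vec by auto
  have v3: "v 3 $ 1 = a" "v 3 $ 2 = 0" "v 3 $ 3 = 0" using sp a_def by auto
  have v5: "v 5 $ 1 = x5" "v 5 $ 2 = y5" "v 5 $ 3 = 0" using sp x5_def y5_def by auto
  have apos: "a > 0" and ypos: "y5 > 0" using sp a_def y5_def by auto
  have d1a: "d1 = a" using assms(5) apos unfolding dist3 v1 v3 by simp
  have e2: "d2^2 = (x5-a)^2 + y5^2" using assms(6) unfolding dist3 v3 v5 by simp
  have e3: "d3^2 = x5^2 + y5^2" using assms(7) unfolding dist3 v1 v5 by simp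
  have ddv: "dd d1 d2 d3 = 2*a*y5"
  proof -
    have q: "d2^4 = (d2^2)^2" "d3^4 = (d3^2)^2" "d1^4 = (d1^2)^2" by simp_all
    have "2*d1\<^sup>2*d2\<^sup>2 + 2*d1\<^sup>2*d3\<^sup>2 + 2*d2\<^sup>2*d3\<^sup>2 - d1^4 - d2^4 - d3^4 = (2*a*y5)^2"
      unfolding q e2 e3 d1a by algebra
    thus ?thesis unfolding dd_def using apos ypos by simp
  qed
  define S1 where "S1 = sqrt (4 - d1^2)"
  define S2 where "S2 = sqrt (4 - d2^2)"
  define S3 where "S3 = sqrt (4 - d3^2)"
  have d1sq: "d1^2 < 4" using assms(8,9) by (simp add: power_strict_mono[of d1 2 2, simplified])
  have d2sq: "d2^2 < 4" using assms(10,11) by (simp add: power_strict_mono[of d2 2 2, simplified])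
  have d3sq: "d3^2 < 4" using assms(12,13) by (simp add: power_strict_mono[of d3 2 2, simplified])
  have Spos: "S1 > 0" "S2 > 0" "S3 > 0" unfolding S1_def S2_def S3_def using d1sq d2sq d3sq by auto
  have d2pos: "d2 > 0" and d3pos: "d3 > 0" using assms by auto
  define j2 where "j2 = inverse d2"
  define j3 where "j3 = inverse d3"
  have id2: "d2 * j2 = 1" and id3: "d3 * j3 = 1" using d2pos d3pos unfolding j2_def j3_def by auto
  have ia: "a * inverse a = 1" using apos by auto
  have i2: "2 * inverse (2::real) = 1" by simp
  have p1: "perp_toward (v 1) (v 3) (v 5) = vector [0, 1, 0]"
  proof (rule perp_comp[where K = y5])
    show "y5 > 0" by (rule ypos)
    show "(v 5 - v 1 - ((v 5 - v 1) \<bullet> (v 3 - v 1) / ((v 3 - v 1) \<bullet> (v 3 - v 1))) *\<^sub>R (v 3 - v 1)) $ 1 = y5 * 0"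
      unfolding v1vec inner3 using apos by (simp add: v3 v5 field_simps power2_eq_square)
    show "(v 5 - v 1 - ((v 5 - v 1) \<bullet> (v 3 - v 1) / ((v 3 - v 1) \<bullet> (v 3 - v 1))) *\<^sub>R (v 3 - v 1)) $ 2 = y5 * 1"
      unfolding v1vec inner3 by (simp add: v3 v5)
    show "(v 5 - v 1 - ((v 5 - v 1) \<bullet> (v 3 - v 1) / ((v 3 - v 1) \<bullet> (v 3 - v 1))) *\<^sub>R (v 3 - v 1)) $ 3 = y5 * 0"
      unfolding v1vec inner3 by (simp add: v3 v5)
  qed simp
  have n35: "(v 5 - v 3) \<bullet> (v 5 - v 3) = d2^2" unfolding inner3 e2 by (simp add: v3 v5 power2_eq_square)
  have n15: "(v 1 - v 5) \<bullet> (v 1 - v 5) = d3^2" unfolding v1vec inner3 e3 by (simp add: v5 power2_eq_square)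
  have p2: "perp_toward (v 3) (v 5) (v 1) = vector [- y5 / d2, (x5 - a) / d2, 0]"
  proof (rule perp_comp[where K = "a * y5 / d2"])
    show "a * y5 / d2 > 0" using apos ypos d2pos by simp
    show "(v 1 - v 3 - ((v 1 - v 3) \<bullet> (v 5 - v 3) / ((v 5 - v 3) \<bullet> (v 5 - v 3))) *\<^sub>R (v 5 - v 3)) $ 1 = a * y5 / d2 * (- y5 / d2)"
      unfolding n35 unfolding inner3 v1 v3 v5 vector_minus_component vector_scaleR_component real_scaleR_def
        divide_inverse power_inverse[symmetric] j2_def[symmetric] using e2 id2 by algebra
    show "(v 1 - v 3 - ((v 1 - v 3) \<bullet> (v 5 - v 3) / ((v 5 - v 3) \<bullet> (v 5 - v 3))) *\<^sub>R (v 5 - v 3)) $ 2 = a * y5 / d2 * ((x5 - a) / d2)"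
      unfolding n35 unfolding inner3 v1 v3 v5 vector_minus_component vector_scaleR_component real_scaleR_def
        divide_inverse power_inverse[symmetric] by (simp add: power2_eq_square algebra_simps)
    show "(v 1 - v 3 - ((v 1 - v 3) \<bullet> (v 5 - v 3) / ((v 5 - v 3) \<bullet> (v 5 - v 3))) *\<^sub>R (v 5 - v 3)) $ 3 = a * y5 / d2 * 0"
      unfolding n35 unfolding inner3 v1 v3 v5 vector_minus_component vector_scaleR_component by simp
    show "(- y5 / d2)^2 + ((x5 - a) / d2)^2 + 0^2 = 1"
      unfolding divide_inverse j2_def[symmetric] zero_power2 add_0_right using e2 id2 by algebra
  qed
  have p3: "perp_toward (v 5) (v 1) (v 3) = vector [y5 / d3, - x5 / d3, 0]"
  proof (rule perp_comp[where K = "a * y5 / d3"])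
    show "a * y5 / d3 > 0" using apos ypos d3pos by simp
    show "(v 3 - v 5 - ((v 3 - v 5) \<bullet> (v 1 - v 5) / ((v 1 - v 5) \<bullet> (v 1 - v 5))) *\<^sub>R (v 1 - v 5)) $ 1 = a * y5 / d3 * (y5 / d3)"
      unfolding n15 unfolding inner3 v1 v3 v5 vector_minus_component vector_scaleR_component real_scaleR_def
        divide_inverse power_inverse[symmetric] j3_def[symmetric] using e3 id3 by algebra
    show "(v 3 - v 5 - ((v 3 - v 5) \<bullet> (v 1 - v 5) / ((v 1 - v 5) \<bullet> (v 1 - v 5))) *\<^sub>R (v 1 - v 5)) $ 2 = a * y5 / d3 * (- x5 / d3)"
      unfolding n15 unfolding inner3 v1 v3 v5 vector_minus_component vector_scaleR_component real_scaleR_def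
        divide_inverse power_inverse[symmetric] j3_def[symmetric] using e3 id3 by algebra
    show "(v 3 - v 5 - ((v 3 - v 5) \<bullet> (v 1 - v 5) / ((v 1 - v 5) \<bullet> (v 1 - v 5))) *\<^sub>R (v 1 - v 5)) $ 3 = a * y5 / d3 * 0"
      unfolding n15 unfolding inner3 v1 v3 v5 vector_minus_component vector_scaleR_component by simp
    show "(y5 / d3)^2 + (- x5 / d3)^2 + 0^2 = 1"
      unfolding divide_inverse j3_def[symmetric] zero_power2 add_0_right using e3 id3 by algebra
  qed
  note c2 = angle_comp[OF assms(14) p1, folded S1_def]
  note c4 = angle_comp[OF assms(15) p2, folded S2_def]
  note c6 = angle_comp[OF assms(16) p3, folded S3_def]
  have v2: "v 2 $ 1 = a/2" "v 2 $ 2 = S1/2 * cos t1" "v 2 $ 3 = S1/2 * sin t1"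
    using c2 unfolding v1 v3 by simp_all
  have v4: "v 4 $ 1 = (a + x5)/2 - S2/2 * cos t2 * y5/d2" "v 4 $ 2 = y5/2 + S2/2*cos t2*(x5-a)/d2"
        "v 4 $ 3 = S2/2 * sin t2"
    using c4 by (simp_all add: v3 v5 field_simps)
  have v6: "v 6 $ 1 = x5/2 + S3/2*cos t3*y5/d3" "v 6 $ 2 = y5/2 - S3/2*cos t3*x5/d3"
        "v 6 $ 3 = S3/2 * sin t3"
    using c6 unfolding v1 v5 by (simp_all add: field_simps)
  note I = ident_all[OF v1 v3 v5 v2 v4 v6 d1a e2 e3 ddv S1_def[symmetric] S2_def[symmetric] S3_def[symmetric]
     apos[THEN less_imp_neq, symmetric] d2pos[THEN less_imp_neq, symmetric] d3pos[THEN less_imp_neq, symmetric]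
     Spos(1)[THEN less_imp_neq, symmetric] Spos(2)[THEN less_imp_neq, symmetric] Spos(3)[THEN less_imp_neq, symmetric]]
  note C = comb[OF assms(17)]
  have P: "D4 (v 5) (v 6) (v 1) (v 4) = D4 (v 1) (v 4) (v 5) (v 6)"
    "D4 (v 5) (v 6) (v 1) (v 2) = D4 (v 1) (v 2) (v 5) (v 6)"
    "D4 (v 3) (v 4) (v 5) (v 2) = - D4 (v 2) (v 3) (v 4) (v 5)"
    by (simp_all add: D4_def cross3_simps)
  have pos: "d1 > 0" "d2 > 0" "d3 > 0" "d1 * S1 > 0" "d2 * S2 > 0" "d3 * S3 > 0"
    using assms Spos by auto
  have neg_of: "\<And>x k D. x * k = -4 * D \<Longrightarrow> k > 0 \<Longrightarrow> D < 0 \<Longrightarrow> x > (0::real)"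
    by (metis mult_neg_neg neg_less_0_iff_less zero_less_mult_pos2 zero_less_numeral mult_minus_left)
  show ?thesis
  proof (intro conjI)
    show "f1 d1 d2 d3 t1 t2 t3 < 0" using I(1) C pos by (simp add: mult_pos_pos mult_neg_pos)
    show "g1 d1 d2 d3 t1 t2 t3 > 0" using neg_of[OF I(2)] C pos P by simp
    show "h1 d1 d2 d3 t1 t2 t3 > 0" using neg_of[OF I(3)] C pos P by simp
    show "f2 d1 d2 d3 t1 t2 t3 < 0" using I(4) C pos by (simp add: mult_pos_neg)
    show "g2 d1 d2 d3 t1 t2 t3 > 0" using neg_of[OF I(5)] C pos P by simp
    show "h2 d1 d2 d3 t1 t2 t3 > 0" using neg_of[OF I(6)] C pos P by simp
    show "f3 d1 d2 d3 t1 t2 t3 < 0" using I(7) C pos by (simp add: mult_pos_neg)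
    show "g3 d1 d2 d3 t1 t2 t3 > 0" using neg_of[OF I(8)] C pos P by simp
    show "h3 d1 d2 d3 t1 t2 t3 > 0" using neg_of[OF I(9)] C pos P by simp
  qed
qed


end
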